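(* The sub-set-operad $\mathrm{RWS}$ of $\mathrm{RW}$ generated by the four trees $A_\mu,A_\prec,A_\succ,A_\odot$ (together with the unit) consists exactly of the recursively labelled red and white trees: for every $n\ge1$, $\mathrm{RWS}(n)$ is the set of trees $T\in\mathrm{RW}(n)$ such that for every node $z$ of $T$, the union of the label sets of all nodes in the subtree rooted at $z$ is an interval of consecutive integers.
   Context: Labelled red and white trees: $\mathrm{RW}(n)$ is the set of finite rooted trees (children unordered) in which each node $z$ carries a possibly empty label set $L(z)\subseteq[n]$, the sets $L(z)$ partition $[n]$, and every node with empty label set has at least two children. A node with nonempty label set is white; a node with empty label set is red if all its children are white, white otherwise. Composition: for $T_1\in\mathrm{RW}(m)$, $T_2\in\mathrm{RW}(n)$, $x\in[m]$, relabel $T_1$ by $y\mapsto y+n-1$ for labels $y>x$ and $T_2$ by $y\mapsto y+x-1$; let $z$ be the node of $T_1$ containing $x$ and $r$ the root of $T_2$. (W) if $r$ is not red: remove $x$ from $L(z)$, add $L(r)$ to $L(z)$, make the children of $r$ children of $z$. (R1) if $r$ is red and $T_1$ is the single node $\{x\}$: result $T_2$. (R2) if $r$ is red and $z$ has a child or $|L(z)|\ge2$: remove $x$ from $L(z)$ and attach $T_2$ as a new child subtree of $z$. (R3) if $r$ is red, $z$ a non-root leaf with $L(z)=\{x\}$: delete $z$ and make the children of $r$ children of the parent of $z$. Colours are recomputed by the colouring rule. This makes $\mathrm{RW}$ a set-operad. The four generators in $\mathrm{RW}(2)$: $A_\mu$ = single node labelled $\{1,2\}$; $A_\prec$ = root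 $\{1\}$ with one child $\{2\}$; $A_\succ$ = root $\{2\}$ with one child $\{1\}$; $A_\odot$ = red root with empty label set and two children labelled $\{1\}$ and $\{2\}$. *)

theory Defs
  imports Main "HOL-Library.Multiset"
begin

datatype rwt = Node "nat set" "rwt multiset"

primrec root_labels :: "rwt \<Rightarrow> nat set" where
  "root_labels (Node L cs) = L"

primrec root_children :: "rwt \<Rightarrow> rwt multiset" where
  "root_children (Node L cs) = cs"

primrec subtrees :: "rwt \<Rightarrow> rwt set" where
  "subtrees (Node L cs) = insert (Node L cs) (\<Union> (set_mset (image_mset subtrees cs)))"

primrec label_union :: "rwt \<Rightarrow> nat set" where
  "label_union (Node L cs) = L \<union> \<Union> (set_mset (image_mset label_union cs))"

primrec label_mset :: "rwt \<Rightarrow> nat multiset" where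
  "label_mset (Node L cs) = mset_set L + sum_mset (image_mset label_mset cs)"

primrec red :: "rwt \<Rightarrow> bool" where
  "red (Node L cs) = (L = {} \<and> (\<forall>b \<in># image_mset red cs. \<not> b))"

text \<open>RW(n): label sets finite, they partition [n] (every element of {1..n}
  occurs in exactly one node, nothing else occurs), and every node with empty
  label set has at least two children.\<close>
definition RW :: "nat \<Rightarrow> rwt \<Rightarrow> bool" where
  "RW n T \<longleftrightarrow>
     (\<forall>S \<in> subtrees T. finite (root_labels S) \<and>
          (root_labels S = {} \<longrightarrow> size (root_children S) \<ge> 2)) \<and>
     label_mset T = mset_set {1..n}"

primrec relab :: "(nat \<Rightarrow> nat) \<Rightarrow> rwt \<Rightarrow> rwt" where
  "relab f (Node L cs) = Node (f ` L) (image_mset (relab f) cs)"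

text \<open>Grafting the (already relabelled) tree T2 at label x of a (relabelled)
  tree, following rules (W), (R1), (R2), (R3).  Rule (R3) is applied at the
  parent of the leaf {x}; rule (R1) is the case where the node containing x is
  a leaf labelled {x} that has no parent.\<close>
primrec graft :: "nat \<Rightarrow> rwt \<Rightarrow> rwt \<Rightarrow> rwt" where
  "graft x T2 (Node L cs) =
     (if x \<in> L then
        (if \<not> red T2 then Node ((L - {x}) \<union> root_labels T2) (cs + root_children T2)
         else if L = {x} \<and> cs = {#} then T2
         else Node (L - {x}) (add_mset T2 cs))
      else if red T2 \<and> Node {x} {#} \<in># cs then
        Node L (cs - {# Node {x} {#} #} + root_children T2)
      else Node L (image_mset (graft x T2) cs))"

definition comp :: "nat \<Rightarrow> nat \<Rightarrow> rwt \<Rightarrow> rwt \<Rightarrow> rwt" where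
  "comp n x T1 T2 =
     graft x (relab (\<lambda>y. y + x - 1) T2)
             (relab (\<lambda>y. if y > x then y + n - 1 else y) T1)"

definition A_mu :: rwt where "A_mu = Node {1,2} {#}"
definition A_prec :: rwt where "A_prec = Node {1} {# Node {2} {#} #}"
definition A_succ :: rwt where "A_succ = Node {2} {# Node {1} {#} #}"
definition A_odot :: rwt where "A_odot = Node {} {# Node {1} {#}, Node {2} {#} #}"

text \<open>The (non-symmetric) sub-set-operad RWS generated by the unit and the four
  generators: the smallest family closed under all partial compositions.\<close>
inductive RWS :: "nat \<Rightarrow> rwt \<Rightarrow> bool" where
  unit: "RWS 1 (Node {1} {#})"
| mu: "RWS 2 A_mu"
| prec: "RWS 2 A_prec"
| succ: "RWS 2 A_succ"
| odot: "RWS 2 A_odot"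
| compose: "\<lbrakk>RWS m T1; RWS n T2; 1 \<le> x; x \<le> m\<rbrakk> \<Longrightarrow> RWS (m + n - 1) (comp n x T1 T2)"

definition recursively_labelled :: "rwt \<Rightarrow> bool" where
  "recursively_labelled T \<longleftrightarrow> (\<forall>S \<in> subtrees T. \<exists>a b. label_union S = {a..b})"

end

theory Submission
  imports Defs
begin

abbreviation lu where "lu \<equiv> label_union"
abbreviation LM where "LM \<equiv> label_mset"

definition wfr :: "rwt \<Rightarrow> bool" where
  "wfr T \<longleftrightarrow> (\<forall>S \<in> subtrees T. finite (root_labels S) \<and>
          (root_labels S = {} \<longrightarrow> size (root_children S) \<ge> 2))"

lemma wfr_Node[simp]: "wfr (Node L cs) \<longleftrightarrow> finite L \<and> (L = {} \<longrightarrow> size cs \<ge> 2) \<and> (\<forall>c\<in>#cs. wfr c)"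
  unfolding wfr_def by auto

lemma RW_wf: "RW n T \<longleftrightarrow> wfr T \<and> LM T = mset_set {1..n}"
  unfolding RW_def wfr_def by simp

definition intv :: "nat set \<Rightarrow> bool" where "intv A \<longleftrightarrow> (\<exists>a b. A = {a..b})"

lemma rl_Node[simp]: "recursively_labelled (Node L cs) \<longleftrightarrow>
   intv (lu (Node L cs)) \<and> (\<forall>c\<in>#cs. recursively_labelled c)"
  unfolding recursively_labelled_def intv_def by auto

lemma lu_LM: "wfr T \<Longrightarrow> lu T = set_mset (LM T)"
  by (induction T) auto

lemma LM_nonempty: "wfr T \<Longrightarrow> LM T \<noteq> {#}"
proof (induction T)
  case (Node L cs)
  show ?case
  proof (cases "L = {}")
    case True
    then have "size cs \<ge> 2" using Node by auto
    then obtain c where c: "c \<in># cs" by (metis all_not_in_conv multiset_nonemptyE not_numeral_le_zero size_empty)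
    then have "LM c \<noteq> {#}" using Node by auto
    then show ?thesis using c by (auto simp: sum_mset_sum_list dest!: multi_member_split)
  next
    case False
    then show ?thesis using Node by (auto simp: mset_set_empty_iff)
  qed
qed


lemma size_LM_ge1: "wfr T \<Longrightarrow> size (LM T) \<ge> 1"
  using LM_nonempty by (metis One_nat_def Suc_leI neq0_conv size_eq_0_iff_empty)

lemma size_LM_red: "wfr T \<Longrightarrow> root_labels T = {} \<Longrightarrow> size (LM T) \<ge> 2"
proof (cases T)
  case (Node L cs)
  assume w: "wfr T" and e: "root_labels T = {}"
  then have L: "L = {}" and s: "size cs \<ge> 2" and cw: "\<forall>c\<in>#cs. wfr c" using Node by auto
  have "size (sum_mset (image_mset LM cs)) = sum_mset (image_mset (\<lambda>c. size (LM c)) cs)"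
    by (induction cs) auto
  also have "\<dots> \<ge> sum_mset (image_mset (\<lambda>c. 1::nat) cs)"
    by (rule sum_mset_mono) (use cw size_LM_ge1 in auto)
  also have "sum_mset (image_mset (\<lambda>c. 1::nat) cs) = size cs" by (induction cs) auto
  finally show ?thesis using s L Node by simp
qed

lemma size_LM_1: "wfr T \<Longrightarrow> size (LM T) = 1 \<Longrightarrow> \<exists>y. T = Node {y} {#}"
proof (cases T)
  case (Node L cs)
  assume w: "wfr T" and s1: "size (LM T) = 1"
  have cw: "\<forall>c\<in>#cs. wfr c" and fL: "finite L" using w Node by auto
  have cs0: "cs = {#}"
  proof (rule ccontr)
    assume "cs \<noteq> {#}"
    then obtain c where c: "c \<in># cs" by blast
    then obtain rest where cs: "cs = add_mset c rest" by (metis multi_member_split)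
    have "size (LM c) \<ge> 1" using cw c size_LM_ge1 by auto
    then have "size (LM T) = card L + size (LM c) + size (sum_mset (image_mset LM rest))"
      using Node cs fL by simp
    then have "L = {}" using s1 \<open>size (LM c) \<ge> 1\<close> fL by simp
    then show False using size_LM_red[OF w] Node s1 by simp
  qed
  then have "card L = 1" using s1 Node fL by simp
  then show ?thesis using Node cs0 by (auto simp: card_1_singleton_iff)
qed

lemma relab_relab: "relab f (relab g T) = relab (f \<circ> g) T"
  by (induction T) (auto simp: image_comp multiset.map_comp intro!: image_mset_cong)

lemma relab_cong: "(\<And>y. y \<in> lu T \<Longrightarrow> f y = g y) \<Longrightarrow> relab f T = relab g T"
  by (induction T) (auto intro!: image_mset_cong)

lemma relab_id: "relab id T = T"
  by (induction T) (auto intro: image_mset_cong [where g = id, simplified])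

lemma relab_id': "(\<And>y. y \<in> lu T \<Longrightarrow> f y = y) \<Longrightarrow> relab f T = T"
  using relab_cong[of T f id] relab_id by auto

lemma lu_relab: "lu (relab f T) = f ` lu T"
  by (induction T) (auto simp: image_Union)

lemma wfr_relab: "wfr T \<Longrightarrow> wfr (relab f T)"
  by (induction T) auto

lemma image_mset_sum: "image_mset f (sum_mset M) = sum_mset (image_mset (image_mset f) M)"
  by (induction M) auto

lemma red_relab[simp]: "red (relab f T) = red T"
  by (induction T) auto

lemma LM_relab: "wfr T \<Longrightarrow> inj_on f (lu T) \<Longrightarrow> LM (relab f T) = image_mset f (LM T)"
proof (induction T)
  case (Node L cs)
  have a: "LM (relab f c) = image_mset f (LM c)" if "c \<in># cs" for c
    using Node that by (auto intro: inj_on_subset)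
  have "image_mset (\<lambda>c. LM (relab f c)) cs = image_mset (\<lambda>c. image_mset f (LM c)) cs"
    using a by (auto intro: image_mset_cong)
  moreover have "inj_on f L" using Node.prems by (auto intro: inj_on_subset)
  ultimately show ?case using Node.prems
    by (simp add: image_mset_mset_set multiset.map_comp o_def image_mset_sum)
qed

lemma graft_id: "x \<notin> lu S \<Longrightarrow> graft x T2 S = S"
proof (induction S)
  case (Node L cs)
  have "x \<notin> L" using Node.prems by simp
  moreover have "Node {x} {#} \<notin># cs" using Node.prems by force
  moreover have "image_mset (graft x T2) cs = cs"
  proof -
    have "image_mset (graft x T2) cs = image_mset id cs"
      by (rule image_mset_cong) (use Node in force)
    then show ?thesis by simp
  qed
  ultimately show ?case by simp
qed


lemma LM_child_le: "c \<in># cs \<Longrightarrow> LM c \<subseteq># LM (Node L cs)"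
proof -
  assume "c \<in># cs"
  then obtain rest where "cs = add_mset c rest" by (metis multi_member_split)
  then show ?thesis by simp
qed

lemma count_LM_child: "c \<in># cs \<Longrightarrow> count (LM c) y \<le> count (LM (Node L cs)) y"
  by (rule mset_subset_eq_count[OF LM_child_le])

lemma set_mset_minus1: "count M x = 1 \<Longrightarrow> set_mset (M - {#x#}) = set_mset M - {x}"
  apply (rule set_eqI) apply (simp add: in_diff_count)
  by (metis count_inI less_one not_less_iff_gr_or_eq zero_neq_one)

lemma LM_graft:
  assumes "wfr S" "wfr T2" "count (LM S) x = 1" "lu S \<inter> lu T2 \<subseteq> {x}"
  shows "LM (graft x T2 S) = LM S - {#x#} + LM T2"
  using assms
proof (induction S)
  case (Node L cs)
  obtain L2 cs2 where T2: "T2 = Node L2 cs2" by (cases T2)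
  have fL: "finite L" and fL2: "finite L2" using Node.prems T2 by auto
  show ?case
  proof (cases "x \<in> L")
    case True
    obtain L' where L': "L = insert x L'" "x \<notin> L'" using True by (metis Set.set_insert)
    have fL': "finite L'" using fL L' by auto
    have "count (mset_set L) x = 1" using True fL by simp
    then have cnt0: "count (sum_mset (image_mset LM cs)) x = 0" using Node.prems(3) by simp
    have nx: "x \<notin> lu c" if "c \<in># cs" for c
    proof
      assume "x \<in> lu c"
      then have "x \<in># LM c" using lu_LM Node.prems that by auto
      then have "x \<in># sum_mset (image_mset LM cs)" using that
        by (metis multi_member_split image_mset_add_mset sum_mset.insert union_iff)
      then show False using cnt0 by (metis count_eq_zero_iff)
    qed
    have LMS: "LM (Node L cs) - {#x#} = mset_set L' + sum_mset (image_mset LM cs)"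
      using L' fL' by simp
    show ?thesis
    proof (cases "red T2")
      case False
      have dj: "L' \<inter> L2 = {}" using Node.prems(4) T2 L' by auto
      have "(L - {x}) \<union> L2 = L' \<union> L2" using L' by auto
      then show ?thesis using False T2 True LMS dj fL' fL2
        by (simp add: mset_set_Union)
    next
      case rT: True
      then have L20: "L2 = {}" using T2 by simp
      show ?thesis
      proof (cases "L = {x} \<and> cs = {#}")
        case True
        then show ?thesis using rT T2 by simp
      next
        case False
        have "L - {x} = L'" using L' by auto
        then show ?thesis using False rT T2 True LMS L20 by auto
      qed
    qed
  next
    case xL: False
    then have cnt: "count (sum_mset (image_mset LM cs)) x = 1" using Node.prems(3) fL by simp
    show ?thesis
    proof (cases "red T2 \<and> Node {x} {#} \<in># cs")
      case True
      then obtain rest where cs: "cs = add_mset (Node {x} {#}) rest" by (metis multi_member_split)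
      have L20: "L2 = {}" using True T2 by simp
      show ?thesis using True xL cs T2 L20 by simp
    next
      case False
      have g: "graft x T2 (Node L cs) = Node L (image_mset (graft x T2) cs)" using xL False by auto
      have "x \<in># sum_mset (image_mset LM cs)" by (rule count_inI) (use cnt in simp)
      then obtain c0 where c0: "c0 \<in># cs" "x \<in># LM c0" by auto
      then obtain rest where cs: "cs = add_mset c0 rest" by (metis multi_member_split)
      have s1: "count (LM c0) x + count (sum_mset (image_mset LM rest)) x = 1" using cnt cs by simp
      have "count (LM c0) x \<ge> 1" using c0(2) by (simp add: Suc_le_eq)
      then have cnt1: "count (LM c0) x = 1" using s1 by linarith
      have cnt0: "count (sum_mset (image_mset LM rest)) x = 0" using cnt cs cnt1 by simp
      have nx: "x \<notin> lu c" if "c \<in># rest" for c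
      proof
        assume "x \<in> lu c"
        then have "x \<in># LM c" using lu_LM Node.prems that cs by auto
        then have "x \<in># sum_mset (image_mset LM rest)" using that
          by (metis multi_member_split image_mset_add_mset sum_mset.insert union_iff)
        then show False using cnt0 by (metis count_eq_zero_iff)
      qed
      have rest: "image_mset (graft x T2) rest = rest"
      proof -
        have "image_mset (graft x T2) rest = image_mset id rest"
          by (rule image_mset_cong) (use nx graft_id in auto)
        then show ?thesis by simp
      qed
      have ih: "LM (graft x T2 c0) = LM c0 - {#x#} + LM T2"
        using Node.IH[OF c0(1)] Node.prems cs cnt1 by auto
      obtain M where M: "LM c0 = add_mset x M" using c0(2) by (metis multi_member_split)
      show ?thesis using g cs rest ih M by simp
    qed
  qed
qed


lemma wfr_graft: "wfr S \<Longrightarrow> wfr T2 \<Longrightarrow> wfr (graft x T2 S)"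
proof (induction S)
  case (Node L cs)
  obtain L2 cs2 where T2: "T2 = Node L2 cs2" by (cases T2)
  have fL: "finite L" and fL2: "finite L2" and cw: "\<forall>c\<in>#cs. wfr c" and cw2: "\<forall>c\<in>#cs2. wfr c"
    and e2: "L2 = {} \<longrightarrow> size cs2 \<ge> 2" and e: "L = {} \<longrightarrow> size cs \<ge> 2"
    using Node.prems T2 by auto
  show ?case
  proof (cases "x \<in> L")
    case True
    show ?thesis
    proof (cases "red T2")
      case False
      have "size (cs + cs2) \<ge> size cs2" by simp
      then show ?thesis using True False T2 fL fL2 cw cw2 e2 by auto
    next
      case rT: True
      show ?thesis
      proof (cases "L = {x} \<and> cs = {#}")
        case True then show ?thesis using rT Node.prems by simp
      next
        case False
        have "L - {x} = {} \<Longrightarrow> size (add_mset T2 cs) \<ge> 2"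
          using False True by (cases cs) auto
        then show ?thesis using False rT True fL cw Node.prems(2) by auto
      qed
    qed
  next
    case xL: False
    show ?thesis
    proof (cases "red T2 \<and> Node {x} {#} \<in># cs")
      case True
      then have "L2 = {}" using T2 by simp
      then have "size cs2 \<ge> 2" using e2 by simp
      moreover obtain rest where cs: "cs = add_mset (Node {x} {#}) rest" using True by (metis multi_member_split)
      ultimately show ?thesis using True xL T2 fL cw2 cw by auto
    next
      case False
      have g: "graft x T2 (Node L cs) = Node L (image_mset (graft x T2) cs)" using xL False by auto
      show ?thesis unfolding g using Node fL e by auto
    qed
  qed
qed

lemma lu_graft:
  assumes "wfr S" "wfr T2" "count (LM S) x = 1" "lu S \<inter> lu T2 \<subseteq> {x}"
  shows "lu (graft x T2 S) = (lu S - {x}) \<union> lu T2"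
proof -
  have "lu (graft x T2 S) = set_mset (LM S - {#x#} + LM T2)"
    using lu_LM[OF wfr_graft[OF assms(1,2)]] LM_graft[OF assms] by simp
  also have "\<dots> = (lu S - {x}) \<union> lu T2"
    using set_mset_minus1[OF assms(3)] lu_LM assms by simp
  finally show ?thesis .
qed

definition good :: "nat \<Rightarrow> nat set \<Rightarrow> rwt \<Rightarrow> bool" where
  "good x U T \<longleftrightarrow> (\<forall>S\<in>subtrees T. (x \<in> lu S \<longrightarrow> intv ((lu S - {x}) \<union> U)) \<and> (x \<notin> lu S \<longrightarrow> intv (lu S)))"

lemma good_Node: "good x U (Node L cs) \<longleftrightarrow>
   (x \<in> lu (Node L cs) \<longrightarrow> intv ((lu (Node L cs) - {x}) \<union> U)) \<and> (x \<notin> lu (Node L cs) \<longrightarrow> intv (lu (Node L cs)))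
   \<and> (\<forall>c\<in>#cs. good x U c)"
  unfolding good_def by (auto simp del: label_union.simps)

lemma good_rl: "x \<notin> lu S \<Longrightarrow> good x U S \<Longrightarrow> recursively_labelled S"
  by (induction S) (auto simp: good_Node)

lemma rl_alt: "recursively_labelled T \<longleftrightarrow> intv (lu T) \<and> (\<forall>c\<in>#root_children T. recursively_labelled c)"
  by (cases T) simp

lemma rl_graft:
  assumes "wfr S" "wfr T2" "recursively_labelled T2" "count (LM S) x = 1" "lu S \<inter> lu T2 \<subseteq> {x}"
    "good x (lu T2) S"
  shows "recursively_labelled (graft x T2 S)"
  using assms
proof (induction S)
  case (Node L cs)
  obtain L2 cs2 where T2: "T2 = Node L2 cs2" by (cases T2)
  have fL: "finite L" using Node.prems by simp
  have "x \<in># LM (Node L cs)" by (rule count_inI) (use Node.prems(4) in simp)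
  then have xS: "x \<in> lu (Node L cs)" by (simp only: lu_LM[OF Node.prems(1)])
  have "intv ((lu (Node L cs) - {x}) \<union> lu T2)" using Node.prems(6) xS unfolding good_Node by blast
  then have root: "intv (lu (graft x T2 (Node L cs)))"
    unfolding lu_graft[OF Node.prems(1,2,4,5)] .
  have cs2: "\<forall>c\<in>#cs2. recursively_labelled c" using Node.prems(3) T2 by simp
  have gc: "\<forall>c\<in>#cs. good x (lu T2) c" using Node.prems(6) by (simp add: good_Node)
  show ?case
  proof (cases "x \<in> L")
    case True
    have "count (mset_set L) x = 1" using True fL by simp
    then have cnt0: "count (sum_mset (image_mset LM cs)) x = 0" using Node.prems(4) by simp
    have nx: "x \<notin> lu c" if "c \<in># cs" for c
    proof
      assume "x \<in> lu c"
      then have "x \<in># LM c" using lu_LM Node.prems that by auto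
      then have "x \<in># sum_mset (image_mset LM cs)" using that
        by (metis multi_member_split image_mset_add_mset sum_mset.insert union_iff)
      then show False using cnt0 by (metis count_eq_zero_iff)
    qed
    have rcs: "\<forall>c\<in>#cs. recursively_labelled c" using nx gc good_rl by blast
    show ?thesis
    proof (cases "red T2")
      case False
      then show ?thesis using root True rcs cs2 T2 by (subst rl_alt) auto
    next
      case rT: True
      show ?thesis
      proof (cases "L = {x} \<and> cs = {#}")
        case True then show ?thesis using rT Node.prems by simp
      next
        case False
        then show ?thesis using root True rcs rT Node.prems(3) by (subst rl_alt) auto
      qed
    qed
  next
    case xL: False
    then have cnt: "count (sum_mset (image_mset LM cs)) x = 1" using Node.prems(4) fL by simp
    show ?thesis
    proof (cases "red T2 \<and> Node {x} {#} \<in># cs")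
      case True
      then obtain rest where cs: "cs = add_mset (Node {x} {#}) rest" by (metis multi_member_split)
      have cnt0: "count (sum_mset (image_mset LM rest)) x = 0" using cnt cs by simp
      have nx: "x \<notin> lu c" if "c \<in># rest" for c
      proof
        assume "x \<in> lu c"
        then have "x \<in># LM c" using lu_LM Node.prems that cs by auto
        then have "x \<in># sum_mset (image_mset LM rest)" using that
          by (metis multi_member_split image_mset_add_mset sum_mset.insert union_iff)
        then show False using cnt0 by (metis count_eq_zero_iff)
      qed
      have rr: "\<forall>c\<in>#rest. recursively_labelled c" using nx gc cs good_rl by (metis union_iff add_mset_add_single)
      show ?thesis using root True xL cs rr cs2 T2 by (subst rl_alt) auto
    next
      case False
      have g: "graft x T2 (Node L cs) = Node L (image_mset (graft x T2) cs)" using xL False by auto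
      have "recursively_labelled (graft x T2 c)" if c: "c \<in># cs" for c
      proof (cases "x \<in> lu c")
        case True
        have "count (LM c) x \<ge> 1" using True lu_LM Node.prems c by (auto simp: Suc_le_eq)
        moreover have "count (LM c) x \<le> 1" using count_LM_child[OF c, of x L] Node.prems(4) by simp
        ultimately have "count (LM c) x = 1" by linarith
        moreover have "lu c \<subseteq> lu (Node L cs)" using c by auto
        ultimately show ?thesis using Node.IH[OF c] Node.prems gc c by auto
      next
        case False
        then show ?thesis using graft_id gc c good_rl by metis
      qed
      then show ?thesis using root unfolding g by (subst rl_alt) auto
    qed
  qed
qed


subsection \<open>intervals and shifts\<close>

lemma image_sub_atLeastAtMost: "d \<le> a \<Longrightarrow> a \<le> b \<Longrightarrow> (\<lambda>y::nat. y - d) ` {a..b} = {a-d..b-d}"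
proof -
  assume "d \<le> a" "a \<le> b"
  then have eq: "{a..b} = (\<lambda>y. y + d) ` {a-d..b-d}" by simp
  show ?thesis unfolding eq image_image by simp
qed

lemma rl_shift_up: "recursively_labelled T \<Longrightarrow> recursively_labelled (relab (\<lambda>y. y + d) T)"
proof (induction T)
  case (Node L cs)
  have "intv (lu (Node L cs))" using Node.prems by simp
  then obtain a b where ab: "lu (Node L cs) = {a..b}" unfolding intv_def by blast
  have "lu (relab (\<lambda>y. y + d) (Node L cs)) = {a+d..b+d}" unfolding lu_relab ab by simp
  then have "intv (lu (relab (\<lambda>y. y + d) (Node L cs)))" unfolding intv_def by blast
  moreover have "\<forall>c\<in>#cs. recursively_labelled (relab (\<lambda>y. y + d) c)" using Node by auto
  ultimately show ?case by (subst rl_alt) auto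
qed

lemma rl_shift_down: "recursively_labelled T \<Longrightarrow> (\<forall>y\<in>lu T. d \<le> y) \<Longrightarrow> recursively_labelled (relab (\<lambda>y. y - d) T)"
proof (induction T)
  case (Node L cs)
  have "intv (lu (Node L cs))" using Node.prems by simp
  then obtain a b where ab: "lu (Node L cs) = {a..b}" unfolding intv_def by blast
  have "intv (lu (relab (\<lambda>y. y - d) (Node L cs)))"
  proof (cases "a \<le> b")
    case True
    then have "d \<le> a" using Node.prems(2) ab by auto
    then have "lu (relab (\<lambda>y. y - d) (Node L cs)) = {a-d..b-d}" unfolding lu_relab ab
      using True by (rule image_sub_atLeastAtMost)
    then show ?thesis unfolding intv_def by blast
  next
    case False
    then have "lu (relab (\<lambda>y. y - d) (Node L cs)) = {1..0}" unfolding lu_relab ab by simp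
    then show ?thesis unfolding intv_def by blast
  qed
  moreover have "\<forall>c\<in>#cs. recursively_labelled (relab (\<lambda>y. y - d) c)" using Node by auto
  ultimately show ?case by (subst rl_alt) auto
qed

definition fins :: "nat \<Rightarrow> nat \<Rightarrow> nat \<Rightarrow> nat" where
  "fins n x y = (if y > x then y + n - 1 else y)"

lemma mem_fins: assumes n: "n \<ge> 1" shows "z \<in> fins n x ` A \<longleftrightarrow> (z \<le> x \<and> z \<in> A) \<or> (z \<ge> x + n \<and> z + 1 - n \<in> A)"
proof
  assume "z \<in> fins n x ` A"
  then obtain y where y: "y \<in> A" "z = fins n x y" by auto
  show "(z \<le> x \<and> z \<in> A) \<or> (z \<ge> x + n \<and> z + 1 - n \<in> A)"
  proof (cases "y > x")
    case True
    then have "z = y + n - 1" using y unfolding fins_def by simp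
    then have "z \<ge> x + n" "z + 1 - n = y" using True n by auto
    then show ?thesis using y by auto
  next
    case False
    then show ?thesis using y unfolding fins_def by simp
  qed
next
  assume h: "(z \<le> x \<and> z \<in> A) \<or> (z \<ge> x + n \<and> z + 1 - n \<in> A)"
  show "z \<in> fins n x ` A"
  proof (cases "z \<le> x \<and> z \<in> A")
    case True
    then have "fins n x z = z" unfolding fins_def by simp
    then show ?thesis using True by (metis image_eqI)
  next
    case False
    then have z: "z \<ge> x + n" "z + 1 - n \<in> A" using h by auto
    then have "fins n x (z + 1 - n) = z" unfolding fins_def using n by auto
    then show ?thesis using z by (metis image_eqI)
  qed
qed

lemma inj_fins: "n \<ge> 1 \<Longrightarrow> inj (fins n x)"
  unfolding fins_def inj_def by (auto split: if_splits)

lemma good_fins: "n \<ge> 1 \<Longrightarrow> recursively_labelled T \<Longrightarrow> good x {x..x+n-1} (relab (fins n x) T)"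
proof (induction T)
  case (Node L cs)
  have "intv (lu (Node L cs))" using Node.prems by simp
  then obtain p q where ab: "lu (Node L cs) = {p..q}" unfolding intv_def by blast
  let ?A = "fins n x ` {p..q}"
  have luN: "lu (relab (fins n x) (Node L cs)) = ?A" unfolding lu_relab ab ..
  have c1: "intv ((?A - {x}) \<union> {x..x+n-1})" if "x \<in> ?A"
  proof -
    have "p \<le> x" "x \<le> q" using that mem_fins[OF Node.prems(1)] Node.prems(1) by auto
    then have "(?A - {x}) \<union> {x..x+n-1} = {p..q+n-1}"
      using Node.prems(1) apply - apply (rule set_eqI) apply (simp only: Un_iff Diff_iff mem_fins[OF Node.prems(1)] atLeastAtMost_iff singleton_iff) by arith
    then show ?thesis unfolding intv_def by blast
  qed
  have c2: "intv ?A" if "x \<notin> ?A"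
  proof (cases "q < x")
    case True
    then have "?A = {p..q}" using Node.prems(1) apply - apply (rule set_eqI) apply (simp only: Un_iff Diff_iff mem_fins[OF Node.prems(1)] atLeastAtMost_iff singleton_iff) by arith
    then show ?thesis unfolding intv_def by blast
  next
    case False
    show ?thesis
    proof (cases "p \<le> q")
      case True
      then have "x < p" using False that mem_fins[OF Node.prems(1)] by fastforce
      then have "?A = {p+n-1..q+n-1}" using Node.prems(1) apply - apply (rule set_eqI) apply (simp only: Un_iff Diff_iff mem_fins[OF Node.prems(1)] atLeastAtMost_iff singleton_iff) by arith
      then show ?thesis unfolding intv_def by blast
    next
      case False
      then have "?A = {}" by auto
      then show ?thesis unfolding intv_def by (metis atLeastatMost_empty zero_less_one)
    qed
  qed
  have "\<forall>c\<in>#cs. good x {x..x+n-1} (relab (fins n x) c)" using Node by auto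
  then show ?case using c1 c2 luN unfolding relab.simps good_Node[of x _ "f ` L" for f]
    by (simp del: label_union.simps)
qed


lemma RW_pos: "RW n T \<Longrightarrow> n \<ge> 1"
  unfolding RW_wf using LM_nonempty by (cases n) auto

lemma comp_RW:
  assumes R1: "RW m T1" and r1: "recursively_labelled T1" and R2: "RW n T2"
    and r2: "recursively_labelled T2" and x: "1 \<le> x" "x \<le> m"
  shows "RW (m+n-1) (comp n x T1 T2) \<and> recursively_labelled (comp n x T1 T2)"
proof -
  have n: "n \<ge> 1" using RW_pos R2 .
  have w1: "wfr T1" and L1: "LM T1 = mset_set {1..m}" using R1 unfolding RW_wf by auto
  have w2: "wfr T2" and L2: "LM T2 = mset_set {1..n}" using R2 unfolding RW_wf by auto
  define S1 where "S1 = relab (fins n x) T1"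
  define S2 where "S2 = relab (\<lambda>y. y + (x - 1)) T2"
  have fe: "(\<lambda>y. if y > x then y + n - 1 else y) = fins n x" unfolding fins_def by auto
  have ge: "(\<lambda>y. y + x - 1) = (\<lambda>y. y + (x - 1))" using x by auto
  have cdef: "comp n x T1 T2 = graft x S2 S1" unfolding comp_def S1_def S2_def fe ge ..
  have ws1: "wfr S1" and ws2: "wfr S2" unfolding S1_def S2_def using w1 w2 wfr_relab by auto
  have ij: "inj_on (fins n x) A" for A using inj_fins[OF n] by (rule inj_on_subset) simp
  have LS1: "LM S1 = mset_set (fins n x ` {1..m})" unfolding S1_def
    using LM_relab[OF w1 ij] L1 ij
    by (simp add: image_mset_mset_set)
  have im2: "(\<lambda>y. y + (x - 1)) ` {1..n} = {x..x+n-1}"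
  proof -
    have "(\<lambda>y. y + (x - 1)) ` {1..n} = {1 + (x-1)..n + (x-1)}" by (rule image_add_atLeastAtMost')
    moreover have "1 + (x-1) = x" "n + (x - 1) = x + n - 1" using x n by auto
    ultimately show ?thesis by simp
  qed
  have LS2: "LM S2 = mset_set {x..x+n-1}" unfolding S2_def
    using LM_relab[OF w2, of "\<lambda>y. y + (x - 1)"] L2 im2
    by (simp add: image_mset_mset_set inj_on_def)
  have lS1: "lu S1 = fins n x ` {1..m}" using lu_LM[OF ws1] LS1 by simp
  have lS2: "lu S2 = {x..x+n-1}" using lu_LM[OF ws2] LS2 by simp
  have xin: "x \<in> fins n x ` {1..m}" using mem_fins[OF n] x by auto
  have cnt: "count (LM S1) x = 1" using LS1 xin by simp
  have dj: "lu S1 \<inter> lu S2 \<subseteq> {x}" unfolding lS1 lS2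
    apply (rule subsetI) apply (simp only: Int_iff mem_fins[OF n] atLeastAtMost_iff singleton_iff)
    using n by arith
  have rs2: "recursively_labelled S2" unfolding S2_def using rl_shift_up[OF r2] .
  have gd: "good x (lu S2) S1" unfolding lS2 S1_def using good_fins[OF n r1] .
  have LG: "LM (graft x S2 S1) = LM S1 - {#x#} + LM S2" using LM_graft[OF ws1 ws2 cnt dj] .
  have seq: "(fins n x ` {1..m} - {x}) \<union> {x..x+n-1} = {1..m+n-1}"
    using n x
    apply - apply (rule set_eqI) apply (simp only: Un_iff Diff_iff mem_fins[OF n] atLeastAtMost_iff singleton_iff)
    by arith
  have "LM S1 - {#x#} = mset_set (fins n x ` {1..m} - {x})" unfolding LS1
    using xin by (simp add: mset_set_Diff)
  then have "LM (graft x S2 S1) = mset_set ((fins n x ` {1..m} - {x}) \<union> {x..x+n-1})"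
    unfolding LG LS2 by (subst mset_set_Union) (use dj lS1 lS2 in auto)
  then have "LM (graft x S2 S1) = mset_set {1..m+n-1}" unfolding seq .
  moreover have "wfr (graft x S2 S1)" using wfr_graft[OF ws1 ws2] .
  moreover have "recursively_labelled (graft x S2 S1)" using rl_graft[OF ws1 ws2 rs2 cnt dj gd] .
  ultimately show ?thesis unfolding cdef RW_wf by auto
qed

lemma i12: "{1..2::nat} = {1,2}" by auto

lemma i12': "{Suc 0..2} = {Suc 0,2}" by auto
lemma intv12: "intv {Suc 0,2}" unfolding intv_def using i12' by metis
lemma intv1: "intv {a}" unfolding intv_def by (metis atLeastAtMost_singleton)

lemma gens:
  "RW 1 (Node {1} {#}) \<and> recursively_labelled (Node {1} {#})"
  "RW 2 A_mu \<and> recursively_labelled A_mu"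
  "RW 2 A_prec \<and> recursively_labelled A_prec"
  "RW 2 A_succ \<and> recursively_labelled A_succ"
  "RW 2 A_odot \<and> recursively_labelled A_odot"
  by (simp_all add: RW_wf A_mu_def A_prec_def A_succ_def A_odot_def i12 i12' intv12 intv1 insert_commute)

lemma RWS_fwd: "RWS n T \<Longrightarrow> RW n T \<and> recursively_labelled T"
  by (induction rule: RWS.induct) (use gens comp_RW in auto)


section \<open>Backward direction\<close>

lemma set_LM_sum: "\<forall>c\<in>#cs. wfr c \<Longrightarrow> set_mset (sum_mset (image_mset LM cs)) = \<Union> (lu ` set_mset cs)"
  by (induction cs) (auto simp: lu_LM)

lemma setlike: "(\<And>y. count M y \<le> 1) \<Longrightarrow> M = mset_set (set_mset M)"
proof (rule multiset_eqI)
  fix y assume h: "\<And>y. count M y \<le> 1"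
  show "count M y = count (mset_set (set_mset M)) y"
  proof (cases "y \<in># M")
    case True
    then have "count M y = 1" using h[of y] by (simp add: Suc_le_eq le_antisym)
    then show ?thesis using True by simp
  next
    case False then show ?thesis by (simp add: count_eq_zero_iff)
  qed
qed

lemma sum_setlike:
  assumes "A + B = mset_set S" "finite S"
  shows "A = mset_set (set_mset A) \<and> B = mset_set (set_mset B) \<and> set_mset A \<inter> set_mset B = {}
     \<and> set_mset A \<union> set_mset B = S"
proof -
  have c: "count A y + count B y = count (mset_set S) y" for y using assms(1) by (metis count_union)
  have cS: "count (mset_set S) y \<le> 1" for y using assms(2) by (simp add: count_mset_set')
  have "A = mset_set (set_mset A)" using c cS by (intro setlike) (metis add_leE)
  moreover have "B = mset_set (set_mset B)" using c cS by (intro setlike) (metis add_leE)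
  moreover have "set_mset A \<inter> set_mset B = {}"
  proof -
    { fix y assume "y \<in># A" "y \<in># B"
      then have "count A y \<ge> 1" "count B y \<ge> 1" by (auto simp: Suc_le_eq)
      then have False using c[of y] cS[of y] by linarith }
    then show ?thesis by blast
  qed
  moreover have "set_mset A \<union> set_mset B = S"
    using arg_cong[OF assms(1), of set_mset] assms(2) by simp
  ultimately show ?thesis by blast
qed

lemma child_split:
  assumes w: "wfr (Node L cs)" and LMT: "LM (Node L cs) = mset_set S" and fS: "finite S" and c: "c \<in># cs"
  defines "rest \<equiv> cs - {#c#}"
  defines "R \<equiv> \<Union> (lu ` set_mset rest)"
  shows "cs = add_mset c rest" "LM c = mset_set (lu c)" "sum_mset (image_mset LM rest) = mset_set R"
    "L \<inter> lu c = {}" "L \<inter> R = {}" "lu c \<inter> R = {}" "L \<union> lu c \<union> R = S" "finite L" "finite R"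
    "finite (lu c)"
proof -
  show cs: "cs = add_mset c rest" unfolding rest_def using c by simp
  have wc: "wfr c" and wr: "\<forall>d\<in>#rest. wfr d" and fL: "finite L" using w c cs by auto
  have sR: "set_mset (sum_mset (image_mset LM rest)) = R" unfolding R_def using set_LM_sum[OF wr] .
  have "mset_set L + (LM c + sum_mset (image_mset LM rest)) = mset_set S" using LMT cs by (simp add: add.assoc)
  note s1 = sum_setlike[OF this fS]
  then have s2: "LM c + sum_mset (image_mset LM rest) = mset_set (set_mset (LM c + sum_mset (image_mset LM rest)))"
    by blast
  note s3 = sum_setlike[OF s2 finite_set_mset]
  have lc: "lu c = set_mset (LM c)" using lu_LM[OF wc] .
  show "LM c = mset_set (lu c)" using s3 lc by simp
  show "sum_mset (image_mset LM rest) = mset_set R" using s3 sR by metis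
  show "L \<inter> lu c = {}" "L \<inter> R = {}" using s1 fL lc sR by auto
  show "lu c \<inter> R = {}" using s3 lc sR by auto
  show "L \<union> lu c \<union> R = S" using s1 fL lc sR by auto
  show "finite L" by fact
  show "finite R" using sR by (metis finite_set_mset)
  show "finite (lu c)" using lc by simp
qed

lemma mkRW:
  assumes "wfr T" "LM T = mset_set {1..m}" "\<forall>c\<in>#root_children T. recursively_labelled c"
  shows "RW m T" "recursively_labelled T"
proof -
  show "RW m T" using assms unfolding RW_wf by simp
  have "lu T = {1..m}" using lu_LM[OF assms(1)] assms(2) by simp
  then show "recursively_labelled T" using assms(3) unfolding rl_alt[of T] intv_def by blast
qed

lemma comp_eq: "1 \<le> x \<Longrightarrow> comp k x T1 T2 = graft x (relab (\<lambda>y. y + (x - 1)) T2) (relab (fins k x) T1)"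
proof -
  assume x: "1 \<le> x"
  have fe: "(\<lambda>y. if y > x then y + k - 1 else y) = fins k x" unfolding fins_def by auto
  have ge: "(\<lambda>y. y + x - 1) = (\<lambda>y. y + (x - 1))" using x by auto
  show ?thesis unfolding comp_def fe ge ..
qed

lemma relab_fins_id: "lu T \<subseteq> {..x} \<Longrightarrow> relab (fins k x) T = T"
  by (rule relab_id') (auto simp: fins_def)

lemma graft_ms_id: "\<forall>d\<in>#rest. x \<notin> lu d \<Longrightarrow> image_mset (graft x T2) rest = rest"
proof -
  assume h: "\<forall>d\<in>#rest. x \<notin> lu d"
  have "image_mset (graft x T2) rest = image_mset id rest"
    by (rule image_mset_cong) (use h graft_id in auto)
  then show ?thesis by simp
qed

lemma comp_step: "RWS m T1 \<Longrightarrow> RWS k T2 \<Longrightarrow> 1 \<le> x \<Longrightarrow> x \<le> m \<Longrightarrow> n = m + k - 1 \<Longrightarrow>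
  comp k x T1 T2 = T \<Longrightarrow> RWS n T"
  using RWS.compose by blast

lemma shift_child:
  assumes w: "wfr c" and r: "recursively_labelled c" and L: "LM c = mset_set {a..b}" and a: "1 \<le> a" "a \<le> b"
  shows "RW (b - a + 1) (relab (\<lambda>y. y - (a - 1)) c)" "recursively_labelled (relab (\<lambda>y. y - (a - 1)) c)"
    "relab (\<lambda>y. y + (a - 1)) (relab (\<lambda>y. y - (a - 1)) c) = c"
    "red (relab (\<lambda>y. y - (a - 1)) c) = red c"
proof -
  have lc: "lu c = {a..b}" using lu_LM[OF w] L by simp
  have inj: "inj_on (\<lambda>y. y - (a - 1)) (lu c)" unfolding lc inj_on_def using a by auto
  have "(\<lambda>y. y - (a - 1)) ` {a..b} = {a - (a-1)..b - (a-1)}" using a by (intro image_sub_atLeastAtMost) auto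
  moreover have "a - (a - 1) = 1" "b - (a - 1) = b - a + 1" using a by auto
  ultimately have im: "(\<lambda>y. y - (a - 1)) ` {a..b} = {1..b - a + 1}" by simp
  have "LM (relab (\<lambda>y. y - (a - 1)) c) = mset_set {1..b - a + 1}"
    unfolding LM_relab[OF w inj] L image_mset_mset_set[OF inj[unfolded lc]] im ..
  then show "RW (b - a + 1) (relab (\<lambda>y. y - (a - 1)) c)" unfolding RW_wf using w wfr_relab by blast
  have "\<forall>y\<in>lu c. a - 1 \<le> y" using lc a by auto
  then show "recursively_labelled (relab (\<lambda>y. y - (a - 1)) c)" by (rule rl_shift_down[OF r])
  show "relab (\<lambda>y. y + (a - 1)) (relab (\<lambda>y. y - (a - 1)) c) = c"
    unfolding relab_relab by (rule relab_id') (use lc a in auto)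
  show "red (relab (\<lambda>y. y - (a - 1)) c) = red c" by simp
qed


lemma lu_nonempty: "wfr d \<Longrightarrow> lu d \<noteq> {}"
  using LM_nonempty lu_LM by fastforce

lemma rest_empty: "\<forall>d\<in>#rest. wfr d \<Longrightarrow> \<Union> (lu ` set_mset rest) = {} \<Longrightarrow> rest = {#}"
  using lu_nonempty by (metis SUP_bot_conv(2) multiset_nonemptyE)

lemma ms_ins1: "finite L \<Longrightarrow> finite R \<Longrightarrow> L \<inter> R = {} \<Longrightarrow> a \<notin> L \<Longrightarrow> a \<notin> R \<Longrightarrow>
  mset_set (insert a L) + mset_set R = mset_set (insert a L \<union> R)"
  by (subst mset_set_Union) auto

lemma ms_ins2: "finite L \<Longrightarrow> finite R \<Longrightarrow> L \<inter> R = {} \<Longrightarrow> a \<notin> L \<Longrightarrow> a \<notin> R \<Longrightarrow>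
  mset_set L + add_mset a (mset_set R) = mset_set (insert a L \<union> R)"
  using ms_ins1[of L R a] by simp

lemma intv_single: "intv {a}" unfolding intv_def by (metis atLeastAtMost_singleton)

locale bw =
  fixes n :: nat and L :: "nat set" and cs :: "rwt multiset"
  assumes IH: "\<And>m T. m < n \<Longrightarrow> RW m T \<Longrightarrow> recursively_labelled T \<Longrightarrow> RWS m T"
    and R: "RW n (Node L cs)" and r: "recursively_labelled (Node L cs)" and n2: "n \<ge> 2"
begin

lemma w: "wfr (Node L cs)" and LMT: "LM (Node L cs) = mset_set {1..n}"
  using R unfolding RW_wf by auto

lemma fL: "finite L" and cw: "\<forall>c\<in>#cs. wfr c" and cr: "\<forall>c\<in>#cs. recursively_labelled c"
  and Le: "L = {} \<Longrightarrow> size cs \<ge> 2"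
  using w r by auto

lemma luT: "lu (Node L cs) = {1..n}" unfolding lu_LM[OF w] LMT by simp

lemma find_child: "y \<in> {1..n} \<Longrightarrow> y \<notin> L \<Longrightarrow> \<exists>c. c \<in># cs \<and> y \<in> lu c"
  using luT by auto

lemma caseB: assumes nL: "n \<notin> L" shows "RWS n (Node L cs)"
proof -
  obtain c where c: "c \<in># cs" "n \<in> lu c" using find_child[of n] nL n2 by auto
  define rest where "rest = cs - {#c#}"
  define Rs where "Rs = \<Union> (lu ` set_mset rest)"
  note cs_split = child_split[OF w LMT _ c(1), folded rest_def, folded Rs_def]
  have cs: "cs = add_mset c rest" and LMc: "LM c = mset_set (lu c)"
    and SR: "sum_mset (image_mset LM rest) = mset_set Rs" and d1: "L \<inter> lu c = {}" and d2: "L \<inter> Rs = {}"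
    and d3: "lu c \<inter> Rs = {}" and un: "L \<union> lu c \<union> Rs = {1..n}" and fR: "finite Rs"
    using cs_split by auto
  have wc: "wfr c" and rc: "recursively_labelled c" using c cw cr by auto
  have wr: "\<forall>d\<in>#rest. wfr d" and rr: "\<forall>d\<in>#rest. recursively_labelled d"
    using cw cr cs by auto
  obtain a b where ab: "lu c = {a..b}" using rc unfolding rl_alt[of c] intv_def by blast
  have "a \<le> n" "n \<le> b" using c(2) ab by auto
  moreover have "b \<in> lu c" using ab \<open>a \<le> n\<close> \<open>n \<le> b\<close> by simp
  then have "b \<in> {1..n}" using un by blast
  ultimately have bn: "b = n" by simp
  have a1: "a \<ge> 1" using un ab \<open>a \<le> n\<close> by auto
  have luc: "lu c = {a..n}" using ab bn by simp
  have LR: "L \<union> Rs = {1..a-1}"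
  proof -
    have "L \<union> Rs = {1..n} - {a..n}" using un d1 d2 d3 luc by auto
    also have "\<dots> = {1..a-1}" using \<open>a \<le> n\<close> a1 by auto
    finally show ?thesis .
  qed
  have a2: "a \<ge> 2"
  proof (rule ccontr)
    assume "\<not> a \<ge> 2"
    then have "a = 1" using a1 by simp
    then have "L = {}" "Rs = {}" using LR by auto
    then have "rest = {#}" using rest_empty[OF wr] unfolding Rs_def by simp
    then show False using Le \<open>L = {}\<close> cs by simp
  qed
  have LMc': "LM c = mset_set {a..n}" using LMc luc by simp
  note sc = shift_child[OF wc rc LMc' a1 \<open>a \<le> n\<close>]
  define c' where "c' = relab (\<lambda>y. y - (a - 1)) c"
  have lt: "n - a + 1 < n" using a2 \<open>a \<le> n\<close> by simp
  have RWSc': "RWS (n - a + 1) c'" unfolding c'_def by (rule IH[OF lt sc(1) sc(2)])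
  have bk: "relab (\<lambda>y. y + (a - 1)) c' = c" unfolding c'_def using sc by simp
  have aR: "a \<notin> Rs" "a \<notin> L" using d1 d2 d3 luc \<open>a \<le> n\<close> by auto
  have restid: "\<forall>d\<in>#rest. a \<notin> lu d" using aR unfolding Rs_def by auto
  show ?thesis
  proof (cases "red c")
    case True
    define T1 where "T1 = Node (insert a L) rest"
    have "size (LM c) \<ge> 2" using size_LM_red[OF wc] True by (cases c) auto
    then have an: "a < n" using LMc' by simp
    have wT1: "wfr T1" unfolding T1_def using fL wr by simp
    have "LM T1 = mset_set (insert a L \<union> Rs)" unfolding T1_def using SR ms_ins1[OF fL fR d2 aR(2,1)] by simp
    moreover have "insert a L \<union> Rs = {1..a}" using LR a1 by auto
    ultimately have LT1: "LM T1 = mset_set {1..a}" by simp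
    note mk = mkRW[OF wT1 LT1]
    have RT1: "RWS a T1" using IH[OF an] mk rr unfolding T1_def by simp
    have luT1: "lu T1 \<subseteq> {..a}" using lu_LM[OF wT1] LT1 by auto
    have ne: "\<not> (insert a L = {a} \<and> rest = {#})"
    proof
      assume "insert a L = {a} \<and> rest = {#}"
      then have "L = {}" "rest = {#}" using aR by auto
      then show False using Le cs by simp
    qed
    have "comp (n - a + 1) a T1 c' = graft a c T1"
      using comp_eq[OF a1] bk relab_fins_id[OF luT1] by simp
    also have "\<dots> = Node L cs" unfolding T1_def using True ne aR cs by auto
    finally have eq: "comp (n - a + 1) a T1 c' = Node L cs" .
    show ?thesis by (rule comp_step[OF RT1 RWSc' a1 order_refl _ eq]) (use an in simp)
  next
    case nred: False
    show ?thesis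
    proof (cases "a < n")
      case an: True
      define T1 where "T1 = Node L (add_mset (Node {a} {#}) rest)"
      have wT1: "wfr T1" unfolding T1_def using fL wr Le cs by auto
      have "LM T1 = mset_set (insert a L \<union> Rs)" unfolding T1_def using SR ms_ins2[OF fL fR d2 aR(2,1)] by simp
      moreover have "insert a L \<union> Rs = {1..a}" using LR a1 by auto
      ultimately have LT1: "LM T1 = mset_set {1..a}" by simp
      note mk = mkRW[OF wT1 LT1]
      have RT1: "RWS a T1" using IH[OF an] mk rr intv_single unfolding T1_def by simp
      have luT1: "lu T1 \<subseteq> {..a}" using lu_LM[OF wT1] LT1 by auto
      have gl: "graft a c (Node {a} {#}) = c" using nred by (cases c) simp
      have "comp (n - a + 1) a T1 c' = graft a c T1"
        using comp_eq[OF a1] bk relab_fins_id[OF luT1] by simp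
      also have "\<dots> = Node L cs" unfolding T1_def using nred aR cs gl graft_ms_id[OF restid] by simp
      finally have eq: "comp (n - a + 1) a T1 c' = Node L cs" .
      show ?thesis by (rule comp_step[OF RT1 RWSc' a1 order_refl _ eq]) (use an in simp)
    next
      case False
      then have an: "a = n" using \<open>a \<le> n\<close> by simp
      then have "size (LM c) = 1" using LMc' by simp
      then obtain y where "c = Node {y} {#}" using size_LM_1[OF wc] by blast
      then have cl: "c = Node {n} {#}" using luc an by simp
      have LRn: "L \<union> Rs = {1..n-1}" using LR an by simp
      have cs': "cs = add_mset (Node {n} {#}) rest" using cs cl by simp
      have n1: "1 \<le> n - 1" "n - 1 < n" and nn: "n = 2 + (n - 1) - 1" using n2 by auto
      have fA: "relab (fins (n - 1) 1) A_prec = Node {1} {#Node {n} {#}#}"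
        "relab (fins (n - 1) 1) A_odot = Node {} {#Node {1} {#}, Node {n} {#}#}"
        using n2 by (simp_all add: A_prec_def A_odot_def fins_def)
      have id0: "relab (\<lambda>y. y + (1 - 1)) D = D" for D by (rule relab_id') simp
      show ?thesis
      proof (cases "L \<noteq> {} \<or> size rest \<ge> 2")
        case True
        define D where "D = Node L rest"
        have wD: "wfr D" unfolding D_def using fL wr True by auto
        have LD: "LM D = mset_set {1..n-1}" unfolding D_def using SR LRn d2 fL fR
          by (simp add: mset_set_Union[symmetric])
        have RD: "RWS (n - 1) D" using IH[OF n1(2)] mkRW[OF wD LD] rr unfolding D_def by simp
        show ?thesis
        proof (cases "red D")
          case False
          have eq: "comp (n - 1) 1 A_prec D = Node L cs"
            unfolding comp_eq[OF order_refl] fA id0 using False unfolding D_def cs' by simp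
          show ?thesis by (rule comp_step[OF RWS.prec RD order_refl _ nn eq]) simp
        next
          case rD: True
          then have L0: "L = {}" unfolding D_def by simp
          have eq: "comp (n - 1) 1 A_odot D = Node L cs"
            unfolding comp_eq[OF order_refl] fA id0 using rD L0 unfolding D_def cs' by simp
          show ?thesis by (rule comp_step[OF RWS.odot RD order_refl _ nn eq]) simp
        qed
      next
        case False
        then have L0: "L = {}" and sr: "size rest < 2" by auto
        have "Rs \<noteq> {}" using LRn L0 n2 by auto
        then have "rest \<noteq> {#}" unfolding Rs_def by auto
        then obtain d where rd: "rest = {#d#}" using sr
          by (metis One_nat_def less_2_cases size_1_singleton_mset size_eq_0_iff_empty)
        have wd: "wfr d" and rdd: "recursively_labelled d" using wr rr rd by auto
        have Ld: "LM d = mset_set {1..n-1}" using SR rd LRn L0 unfolding Rs_def by simp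
        have "\<forall>c\<in>#root_children d. recursively_labelled c" using rdd by (cases d) simp
        then have Rd: "RWS (n - 1) d" using IH[OF n1(2)] mkRW(1)[OF wd Ld] rdd by simp
        show ?thesis
        proof (cases "red d")
          case True
          have eq: "comp (n - 1) 1 A_prec d = Node L cs"
            unfolding comp_eq[OF order_refl] fA id0 using True L0 unfolding cs' rd by simp
          show ?thesis by (rule comp_step[OF RWS.prec Rd order_refl _ nn eq]) simp
        next
          case False
          have g1: "graft 1 d (Node {1} {#}) = d" using False by (cases d) simp
          have eq: "comp (n - 1) 1 A_odot d = Node L cs"
            unfolding comp_eq[OF order_refl] fA id0 using False L0 n2 g1 unfolding cs' rd
            by (simp add: add_mset_commute)
          show ?thesis by (rule comp_step[OF RWS.odot Rd order_refl _ nn eq]) simp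
        qed
      qed
    qed
  qed
qed

lemma caseA: assumes nL: "n \<in> L" shows "RWS n (Node L cs)"
proof (cases "n - 1 \<in> L")
  case True
  define T1 where "T1 = Node (L - {n}) cs"
  have n1: "1 \<le> n - 1" "n - 1 < n" and nn: "n = (n - 1) + 2 - 1" using n2 by auto
  have wT1: "wfr T1" unfolding T1_def using fL cw True n2 by auto
  have "LM (Node L cs) = add_mset n (LM T1)" unfolding T1_def using fL nL
    by (simp add: mset_set.remove[OF fL nL])
  then have "LM T1 = mset_set {1..n} - {#n#}" using LMT by (metis add_mset_remove_trivial)
  also have "\<dots> = mset_set ({1..n} - {n})" using n2 by (simp add: mset_set_Diff)
  also have "{1..n} - {n} = {1..n-1}" using n2 by auto
  finally have LT1: "LM T1 = mset_set {1..n-1}" .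
  have RT1: "RWS (n - 1) T1" using IH[OF n1(2)] mkRW[OF wT1 LT1] cr unfolding T1_def by simp
  have luT1: "lu T1 \<subseteq> {..n-1}" using lu_LM[OF wT1] LT1 by auto
  have fm: "relab (\<lambda>y. y + (n - 1 - 1)) A_mu = Node {n - 1, n} {#}" using n2 by (simp add: A_mu_def)
  have "L - {n} - {n - 1} \<union> {n - 1, n} = L" using True nL by auto
  then have eq: "comp 2 (n - 1) T1 A_mu = Node L cs"
    unfolding comp_eq[OF n1(1)] fm relab_fins_id[OF luT1] unfolding T1_def using True n2 by auto
  show ?thesis by (rule comp_step[OF RT1 RWS.mu n1(1) order_refl nn eq])
next
  case nL1: False
  have "n - 1 \<in> {1..n}" using n2 by auto
  then obtain c where c: "c \<in># cs" "n - 1 \<in> lu c" using find_child[of "n - 1"] nL1 by blast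
  define rest where "rest = cs - {#c#}"
  define Rs where "Rs = \<Union> (lu ` set_mset rest)"
  note cs_split = child_split[OF w LMT _ c(1), folded rest_def, folded Rs_def]
  have cs: "cs = add_mset c rest" and LMc: "LM c = mset_set (lu c)"
    and SR: "sum_mset (image_mset LM rest) = mset_set Rs" and d1: "L \<inter> lu c = {}" and d2: "L \<inter> Rs = {}"
    and d3: "lu c \<inter> Rs = {}" and un: "L \<union> lu c \<union> Rs = {1..n}" and fR: "finite Rs"
    using cs_split by auto
  have wc: "wfr c" and rc: "recursively_labelled c" using c cw cr by auto
  have wr: "\<forall>d\<in>#rest. wfr d" and rr: "\<forall>d\<in>#rest. recursively_labelled d"
    using cw cr cs by auto
  obtain a b where ab: "lu c = {a..b}" using rc unfolding rl_alt[of c] intv_def by blast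
  have an: "a \<le> n - 1" "n - 1 \<le> b" using c(2) ab by auto
  have "b \<in> lu c" using ab an by simp
  then have "b \<in> {1..n}" "b \<noteq> n" using un d1 nL by blast+
  then have bn: "b = n - 1" using an by auto
  have a1: "a \<ge> 1" using un ab an by auto
  have luc: "lu c = {a..n-1}" using ab bn by simp
  have LR: "L \<union> Rs = {1..a-1} \<union> {n}"
  proof -
    have "L \<union> Rs = {1..n} - {a..n-1}" using un d1 d2 d3 luc by auto
    also have "\<dots> = {1..a-1} \<union> {n}" using an a1 n2 by auto
    finally show ?thesis .
  qed
  have LMc': "LM c = mset_set {a..n-1}" using LMc luc by simp
  have aR: "a \<notin> Rs" "a \<notin> L" using d1 d2 d3 luc an by auto
  show ?thesis
  proof (cases "a \<ge> 2")
    case a2: True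
    note sc = shift_child[OF wc rc LMc' a1 an(1)]
    define c' where "c' = relab (\<lambda>y. y - (a - 1)) c"
    have k: "n - 1 - a + 1 = n - a" using an(1) n2 by arith
    define T2 where "T2 = Node {n - a + 1} {#c'#}"
    have wT2: "wfr T2" unfolding T2_def c'_def using wc wfr_relab by simp
    have "LM c' = mset_set {1..n-a}" using sc(1) k unfolding c'_def RW_wf by simp
    then have "LM T2 = mset_set (insert (n - a + 1) {1..n-a})" unfolding T2_def by simp
    also have "insert (n - a + 1) {1..n-a} = {1..n-a+1}" by auto
    finally have LT2: "LM T2 = mset_set {1..n-a+1}" .
    have lt2: "n - a + 1 < n" using a2 an by simp
    have RT2: "RWS (n - a + 1) T2" using IH[OF lt2] mkRW[OF wT2 LT2] sc(2) unfolding T2_def c'_def by simp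
    have bk: "relab (\<lambda>y. y + (a - 1)) T2 = Node {n} {#c#}" unfolding T2_def c'_def using sc(3) an a2 by simp
    define T1 where "T1 = Node (insert a (L - {n})) rest"
    have wT1: "wfr T1" unfolding T1_def using fL wr by simp
    have "LM T1 = mset_set (insert a (L - {n}) \<union> Rs)" unfolding T1_def
      using SR ms_ins1[of "L - {n}" Rs a] fL fR d2 aR by auto
    moreover have "insert a (L - {n}) \<union> Rs = {1..a}"
    proof -
      have nR: "n \<notin> Rs" using nL d2 by blast
      have "insert a (L - {n}) \<union> Rs = insert a ((L \<union> Rs) - {n})" using nR by blast
      also have "\<dots> = insert a {1..a-1}" unfolding LR using an n2 by auto
      also have "\<dots> = {1..a}" using a1 by auto
      finally show ?thesis .
    qed
    ultimately have LT1: "LM T1 = mset_set {1..a}" by simp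
    have lt1: "a < n" using an n2 by simp
    have RT1: "RWS a T1" using IH[OF lt1] mkRW[OF wT1 LT1] rr unfolding T1_def by simp
    have luT1: "lu T1 \<subseteq> {..a}" using lu_LM[OF wT1] LT1 by auto
    have "insert a (L - {n}) - {a} \<union> {n} = L" using aR nL by auto
    then have eq: "comp (n - a + 1) a T1 T2 = Node L cs"
      unfolding comp_eq[OF a1] bk relab_fins_id[OF luT1] unfolding T1_def cs by simp
    show ?thesis by (rule comp_step[OF RT1 RT2 a1 order_refl _ eq]) (use an in simp)
  next
    case False
    then have a1': "a = 1" using a1 by simp
    then have "L \<union> Rs = {n}" using LR by simp
    then have L0: "L = {n}" and "Rs = {}" using nL d2 by auto
    then have "rest = {#}" using rest_empty[OF wr] unfolding Rs_def by simp
    then have cs1: "cs = {#c#}" using cs by simp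
    have Lc: "LM c = mset_set {1..n-1}" using LMc' a1' by simp
    have n1: "1 \<le> n - 1" "n - 1 < n" and nn: "n = 2 + (n - 1) - 1" using n2 by auto
    have "\<forall>d\<in>#root_children c. recursively_labelled d" using rc by (cases c) simp
    then have Rc: "RWS (n - 1) c" using IH[OF n1(2)] mkRW(1)[OF wc Lc] rc by simp
    have fA: "relab (fins (n - 1) 1) A_mu = Node {1, n} {#}"
        "relab (fins (n - 1) 1) A_succ = Node {n} {#Node {1} {#}#}"
        using n2 by (simp_all add: A_mu_def A_succ_def fins_def)
    have id0: "relab (\<lambda>y. y + (1 - 1)) D = D" for D by (rule relab_id') simp
    show ?thesis
    proof (cases "red c")
      case True
      have "{1, n} \<noteq> {1::nat}" "{1, n} - {1} = {n::nat}" using n2 by auto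
      then have eq: "comp (n - 1) 1 A_mu c = Node L cs"
        unfolding comp_eq[OF order_refl] fA id0 using True L0 cs1 by simp
      show ?thesis by (rule comp_step[OF RWS.mu Rc order_refl _ nn eq]) simp
    next
      case False
      have g1: "graft 1 c (Node {1} {#}) = c" using False by (cases c) simp
      have eq: "comp (n - 1) 1 A_succ c = Node L cs"
        unfolding comp_eq[OF order_refl] fA id0 using False L0 cs1 g1 n2 by simp
      show ?thesis by (rule comp_step[OF RWS.succ Rc order_refl _ nn eq]) simp
    qed
  qed
qed

end

lemma RWS_bwd: "RW n T \<Longrightarrow> recursively_labelled T \<Longrightarrow> RWS n T"
proof (induction n arbitrary: T rule: less_induct)
  case (less n T)
  obtain L cs where T: "T = Node L cs" by (cases T)
  have n1: "n \<ge> 1" using RW_pos[OF less.prems(1)] .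
  show ?case
  proof (cases "n = 1")
    case True
    have w: "wfr T" and LT: "LM T = {#1#}" using less.prems(1) True unfolding RW_wf by auto
    then obtain y where "T = Node {y} {#}" using size_LM_1 by fastforce
    then have "T = Node {1} {#}" using LT by simp
    then show ?thesis using True RWS.unit by simp
  next
    case False
    then have "n \<ge> 2" using n1 by simp
    then interpret bw n L cs using less unfolding T by unfold_locales auto
    show ?thesis unfolding T using caseA caseB by blast
  qed
qed

theorem mainTheorem6:
  fixes n :: nat and T :: rwt
  assumes "n \<ge> 1"
  shows "RWS n T \<longleftrightarrow> RW n T \<and> recursively_labelled T"
  using RWS_fwd RWS_bwd by blast

end
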